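(* Let $G$ be the full group of a Bratteli diagram whose path space $X$ is a Cantor set and on which $G$ acts minimally. Let $\mu$ be an ergodic $G$-invariant Borel probability measure on $X$. Let $B$ be a clopen set and, for each $n$, let $B_n$ be a $G_n$-invariant clopen set, such that $\mu(B_n)\to\mu(B)>0$ as $n\to\infty$. Then for every clopen set $A$, $\mu(A\cap B_n)\to\mu(A)\mu(B)$ as $n\to\infty$.
   Context: Bratteli diagram: levels $V_0=\{v_0\},V_1,\dots$, finite edge sets $E_n$ from $V_{n-1}$ to $V_n$; path space $X$ of infinite paths from $v_0$ with the cylinder topology. $G_n$: group of homeomorphisms of $X$ replacing the first $n$ edges of each path by another path from $v_0$ to the same vertex of $V_n$ (depending only on those edges) and leaving the rest; full group $G=\bigcup_nG_n$. A set is $G_n$-invariant if it is mapped onto itself by every element of $G_n$. *)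

theory Defs
  imports "HOL-Analysis.Analysis" "HOL-Probability.Probability"
begin

definition bratteli ::
  "(nat \<Rightarrow> 'v set) \<Rightarrow> (nat \<Rightarrow> 'e set) \<Rightarrow> ('e \<Rightarrow> 'v) \<Rightarrow> ('e \<Rightarrow> 'v) \<Rightarrow> 'v \<Rightarrow> bool" where
  "bratteli V E src rng v0 \<longleftrightarrow>
     V 0 = {v0} \<and> (\<forall>n. finite (V n)) \<and> (\<forall>n. finite (E n)) \<and> E 0 = {} \<and>
     (\<forall>n\<ge>1. \<forall>e\<in>E n. src e \<in> V (n - 1) \<and> rng e \<in> V n)"

text \<open>Infinite paths from v0: x i is the edge from level i to level i+1, i.e. x i \<in> E (Suc i).\<close>
definition path_space ::
  "(nat \<Rightarrow> 'e set) \<Rightarrow> ('e \<Rightarrow> 'v) \<Rightarrow> ('e \<Rightarrow> 'v) \<Rightarrow> 'v \<Rightarrow> (nat \<Rightarrow> 'e) set" where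
  "path_space E src rng v0 =
     {x. (\<forall>i. x i \<in> E (Suc i)) \<and> src (x 0) = v0 \<and> (\<forall>i. rng (x i) = src (x (Suc i)))}"

definition path_topology ::
  "(nat \<Rightarrow> 'e set) \<Rightarrow> ('e \<Rightarrow> 'v) \<Rightarrow> ('e \<Rightarrow> 'v) \<Rightarrow> 'v \<Rightarrow> (nat \<Rightarrow> 'e) topology" where
  "path_topology E src rng v0 =
     subtopology (product_topology (\<lambda>i. discrete_topology (E (Suc i))) UNIV)
                 (path_space E src rng v0)"

text \<open>G_n: homeomorphisms of X that change only the first n edges of a path, the new
  first n edges depending only on the old first n edges (the end vertex at level n is then
  automatically preserved, since the path continues with the same edge n+1).\<close>
definition Gn :: "(nat \<Rightarrow> 'e) topology \<Rightarrow> nat \<Rightarrow> ((nat \<Rightarrow> 'e) \<Rightarrow> (nat \<Rightarrow> 'e)) set" where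
  "Gn T n = {g. homeomorphic_map T T g \<and>
       (\<forall>x\<in>topspace T. \<forall>i\<ge>n. g x i = x i) \<and>
       (\<forall>x\<in>topspace T. \<forall>y\<in>topspace T. (\<forall>i<n. x i = y i) \<longrightarrow> (\<forall>i<n. g x i = g y i))}"

definition full_group :: "(nat \<Rightarrow> 'e) topology \<Rightarrow> ((nat \<Rightarrow> 'e) \<Rightarrow> (nat \<Rightarrow> 'e)) set" where
  "full_group T = (\<Union>n. Gn T n)"

definition invariant_set :: "('a \<Rightarrow> 'a) set \<Rightarrow> 'a set \<Rightarrow> bool" where
  "invariant_set H A \<longleftrightarrow> (\<forall>g\<in>H. g ` A = A)"

definition minimal_action :: "'a topology \<Rightarrow> ('a \<Rightarrow> 'a) set \<Rightarrow> bool" where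
  "minimal_action T H \<longleftrightarrow> (\<forall>x\<in>topspace T. T closure_of ((\<lambda>g. g x) ` H) = topspace T)"

definition cantor_space :: "'a topology \<Rightarrow> bool" where
  "cantor_space T \<longleftrightarrow> topspace T \<noteq> {} \<and> compact_space T \<and> metrizable_space T \<and>
     (\<forall>x\<in>topspace T. connected_component_of_set T x = {x}) \<and>
     T derived_set_of (topspace T) = topspace T"

definition clopen_in :: "'a topology \<Rightarrow> 'a set \<Rightarrow> bool" where
  "clopen_in T A \<longleftrightarrow> openin T A \<and> closedin T A"

definition borel_prob :: "'a topology \<Rightarrow> 'a measure \<Rightarrow> bool" where
  "borel_prob T \<mu> \<longleftrightarrow> prob_space \<mu> \<and> space \<mu> = topspace T \<and>
     sets \<mu> = sigma_sets (topspace T) {U. openin T U}"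

definition invariant_measure :: "('a \<Rightarrow> 'a) set \<Rightarrow> 'a measure \<Rightarrow> bool" where
  "invariant_measure H \<mu> \<longleftrightarrow>
     (\<forall>g\<in>H. \<forall>A\<in>sets \<mu>. g -` A \<inter> space \<mu> \<in> sets \<mu> \<and> measure \<mu> (g -` A \<inter> space \<mu>) = measure \<mu> A)"

definition ergodic_measure :: "('a \<Rightarrow> 'a) set \<Rightarrow> 'a measure \<Rightarrow> bool" where
  "ergodic_measure H \<mu> \<longleftrightarrow>
     (\<forall>A\<in>sets \<mu>. invariant_set H A \<longrightarrow> measure \<mu> A = 0 \<or> measure \<mu> A = 1)"

end

theory Submission
  imports Defs
begin


lemma (in prob_space) int_bdd:
  fixes h :: "'a \<Rightarrow> real"
  assumes "h \<in> borel_measurable M" "\<And>x. x \<in> space M \<Longrightarrow> \<bar>h x\<bar> \<le> B"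
  shows "integrable M h"
  using assms by (intro integrable_const_bound[where B=B]) auto

lemma (in prob_space) sq_abs_le:
  fixes h :: "'a \<Rightarrow> real"
  assumes hm: "h \<in> borel_measurable M" and hb: "\<And>x. x \<in> space M \<Longrightarrow> \<bar>h x\<bar> \<le> 1"
  shows "(\<integral>x. \<bar>h x\<bar> \<partial>M)^2 \<le> (\<integral>x. (h x)^2 \<partial>M)"
proof -
  define a where "a = (\<integral>x. \<bar>h x\<bar> \<partial>M)"
  have i1: "integrable M (\<lambda>x. \<bar>h x\<bar>)" using hm hb by (intro int_bdd[where B=1]) auto
  have i2: "integrable M (\<lambda>x. (h x)^2)"
  proof (intro int_bdd[where B=1])
    fix x assume "x \<in> space M"
    then have "\<bar>h x\<bar>^2 \<le> 1^2" using hb by (intro power_mono) auto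
    then show "\<bar>(h x)^2\<bar> \<le> 1" by simp
  qed (use hm in auto)
  have "0 \<le> (\<integral>x. (\<bar>h x\<bar> - a)^2 \<partial>M)" by (intro integral_nonneg_AE) auto
  also have "\<dots> = (\<integral>x. (h x)^2 + a^2 - 2 * a * \<bar>h x\<bar> \<partial>M)"
    by (intro Bochner_Integration.integral_cong) (auto simp: power2_diff)
  also have "\<dots> = (\<integral>x. (h x)^2 \<partial>M) + a^2 - 2 * a * a"
    using i1 i2 by (simp add: prob_space a_def)
  finally show ?thesis unfolding a_def by (simp add: power2_eq_square)
qed

lemma (in prob_space) ana:
  fixes f :: "nat \<Rightarrow> 'a \<Rightarrow> real" and c :: real
  assumes fm: "\<And>n. f n \<in> borel_measurable M"
    and fb: "\<And>n x. x \<in> space M \<Longrightarrow> 0 \<le> f n x \<and> f n x \<le> 1"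
    and cross: "\<And>n k. n \<le> k \<Longrightarrow> (\<integral>x. f n x * f k x \<partial>M) = (\<integral>x. (f k x)^2 \<partial>M)"
    and mean: "\<And>n. (\<integral>x. f n x \<partial>M) = c"
    and erg: "\<And>r. strict_mono r \<Longrightarrow>
        measure M {x\<in>space M. c < lim (\<lambda>j. f (r j) x)} \<in> {0,1} \<and>
        measure M {x\<in>space M. lim (\<lambda>j. f (r j) x) < c} \<in> {0,1}"
  shows "(\<lambda>n. \<integral>x. \<bar>f n x - c\<bar> \<partial>M) \<longlonglongrightarrow> 0"
proof -
  have intf: "\<And>n. integrable M (f n)" using fm fb by (intro int_bdd[where B=1]) auto
  have intp: "\<And>n k. integrable M (\<lambda>x. f n x * f k x)"
  proof (intro int_bdd[where B=1])
    fix n k x assume "x \<in> space M"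
    then show "\<bar>f n x * f k x\<bar> \<le> 1" using fb[of x n] fb[of x k]
      by (simp add: abs_mult mult_le_one)
  qed (use fm in auto)
  have intsq: "\<And>n. integrable M (\<lambda>x. (f n x)^2)"
    using intp by (simp add: power2_eq_square)
  define e where "e n = (\<integral>x. (f n x)^2 \<partial>M)" for n
  have diff: "(\<integral>x. (f n x - f k x)^2 \<partial>M) = e n - e k" if nk: "n \<le> k" for n k
  proof -
    have "(\<integral>x. (f n x - f k x)^2 \<partial>M) = (\<integral>x. (f n x)^2 + (f k x)^2 - 2 * (f n x * f k x) \<partial>M)"
      by (simp add: power2_diff mult.assoc)
    also have "\<dots> = e n + e k - 2 * (\<integral>x. f n x * f k x \<partial>M)"
      using intsq intp by (simp add: e_def)
    also have "\<dots> = e n - e k" using cross[OF nk] by (simp add: e_def)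
    finally show ?thesis .
  qed
  have dec: "e k \<le> e n" if "n \<le> k" for n k
  proof -
    have "0 \<le> (\<integral>x. (f n x - f k x)^2 \<partial>M)" by (intro integral_nonneg_AE) auto
    then show ?thesis using diff[OF that] by simp
  qed
  have enn: "0 \<le> e n" for n unfolding e_def by (intro integral_nonneg_AE) auto
  obtain L where eL: "e \<longlonglongrightarrow> L" and eLe: "\<forall>i. L \<le> e i"
    by (rule decseq_convergent[of e 0]) (use dec enn in \<open>auto simp: monotone_on_def\<close>)
  have cvar: "(\<integral>x. (f n x - c)^2 \<partial>M) = e n - c^2" for n
  proof -
    have "(\<integral>x. (f n x - c)^2 \<partial>M) = (\<integral>x. (f n x)^2 + c^2 - 2 * c * f n x \<partial>M)"
      by (simp add: power2_diff mult.commute mult.left_commute)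
    also have "\<dots> = e n + c^2 - 2 * c * c"
      using intsq intf mean by (simp add: e_def prob_space)
    finally show ?thesis by (simp add: power2_eq_square)
  qed
  have "\<forall>j. \<exists>N. \<forall>n\<ge>N. e n - L \<le> (1/4)^j"
  proof
    fix j :: nat
    have "(1/4::real)^j > 0" by simp
    from LIMSEQ_D[OF eL this] obtain N where "\<forall>n\<ge>N. norm (e n - L) < (1/4)^j" by blast
    then show "\<exists>N. \<forall>n\<ge>N. e n - L \<le> (1/4)^j"
    proof (intro exI[of _ N] allI impI)
      fix n assume "N \<le> n" "\<forall>n\<ge>N. norm (e n - L) < (1/4)^j"
      then have "\<bar>e n - L\<bar> < (1/4)^j" by auto
      then show "e n - L \<le> (1/4)^j" by linarith
    qed
  qed
  then obtain N where N: "\<And>j n. N j \<le> n \<Longrightarrow> e n - L \<le> (1/4)^j" by metis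
  define r where "r = rec_nat (N 0) (\<lambda>j rj. max (Suc rj) (N (Suc j)))"
  have r0: "r 0 = N 0" and rS: "\<And>j. r (Suc j) = max (Suc (r j)) (N (Suc j))"
    by (simp_all add: r_def)
  have rmono: "strict_mono r" unfolding strict_mono_Suc_iff using rS by auto
  have rN: "N j \<le> r j" for j by (cases j) (auto simp: r0 rS)
  define d where "d j x = \<bar>f (r j) x - f (r (Suc j)) x\<bar>" for j x
  have dm[measurable]: "\<And>j. d j \<in> borel_measurable M" unfolding d_def using fm by measurable
  have step: "(\<integral>x. d j x \<partial>M) \<le> (1/2)^j" for j
  proof -
    have "(\<integral>x. d j x \<partial>M)^2 \<le> (\<integral>x. (f (r j) x - f (r (Suc j)) x)^2 \<partial>M)"
      unfolding d_def
    proof (rule sq_abs_le)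
      fix x assume "x \<in> space M"
      then show "\<bar>f (r j) x - f (r (Suc j)) x\<bar> \<le> 1" using fb[of x "r j"] fb[of x "r (Suc j)"] by auto
    qed (use fm in auto)
    also have "\<dots> = e (r j) - e (r (Suc j))"
      using diff rmono by (simp add: strict_mono_Suc_iff less_imp_le)
    also have "\<dots> \<le> e (r j) - L" using eLe by simp
    also have "\<dots> \<le> (1/4)^j" using N rN by blast
    also have "\<dots> = ((1/2)^j)^2" by (simp add: power2_eq_square power_mult_distrib[symmetric])
    finally show ?thesis by (rule power2_le_imp_le) simp
  qed
  have intd: "\<And>j. integrable M (d j)"
  proof (rule int_bdd[where B=1])
    fix j x assume "x \<in> space M"
    then show "\<bar>d j x\<bar> \<le> 1" using fb[of x "r j"] fb[of x "r (Suc j)"] by (auto simp: d_def)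
  qed (use dm in auto)
  have AEsum: "AE x in M. summable (\<lambda>j. d j x)"
  proof -
    have "(\<integral>\<^sup>+x. (\<Sum>j. ennreal (d j x)) \<partial>M) = (\<Sum>j. \<integral>\<^sup>+x. ennreal (d j x) \<partial>M)"
      by (rule nn_integral_suminf) (use dm in measurable)
    also have "\<dots> = (\<Sum>j. ennreal (\<integral>x. d j x \<partial>M))"
      using intd by (subst nn_integral_eq_integral) (auto simp: d_def)
    also have "\<dots> \<le> (\<Sum>j. ennreal ((1/2)^j))"
      by (intro suminf_le) (auto simp: step ennreal_leI)
    also have "\<dots> = ennreal 2"
      by (subst suminf_ennreal2) (auto simp: suminf_geometric)
    finally have "(\<integral>\<^sup>+x. (\<Sum>j. ennreal (d j x)) \<partial>M) \<noteq> \<top>"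
      by (auto simp: top_unique)
    moreover have mm: "(\<lambda>x. \<Sum>j. ennreal (d j x)) \<in> borel_measurable M" by measurable
    ultimately have "AE x in M. (\<Sum>j. ennreal (d j x)) \<noteq> \<top>"
      using nn_integral_PInf_AE[OF mm] by (simp add: infinity_ennreal_def)
    then show ?thesis
      by eventually_elim (rule summable_suminf_not_top, auto simp: d_def)
  qed
  have AEconv: "AE x in M. convergent (\<lambda>j. f (r j) x)"
    using AEsum
  proof eventually_elim
    fix x assume "summable (\<lambda>j. d j x)"
    have eq: "(\<lambda>j. norm (f (r (Suc j)) x - f (r j) x)) = (\<lambda>j. d j x)"
      unfolding d_def real_norm_def by (intro ext) (rule abs_minus_commute)
    have "summable (\<lambda>j. f (r (Suc j)) x - f (r j) x)"
      using \<open>summable (\<lambda>j. d j x)\<close> unfolding eq[symmetric] by (rule summable_norm_cancel)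
    then have "convergent (\<lambda>m. \<Sum>j<m. f (r (Suc j)) x - f (r j) x)"
      by (simp only: summable_iff_convergent)
    then have "convergent (\<lambda>m. f (r m) x - f (r 0) x)"
      using sum_lessThan_telescope[of "\<lambda>j. f (r j) x"] by simp
    then have "convergent (\<lambda>m. (f (r m) x - f (r 0) x) + f (r 0) x)"
      by (simp only: convergent_add_const_right_iff)
    then show "convergent (\<lambda>j. f (r j) x)" by simp
  qed
  define F where "F x = lim (\<lambda>j. f (r j) x)" for x
  have FM: "F \<in> borel_measurable M" unfolding F_def by (rule borel_measurable_lim_metric) (rule fm)
  have AElim: "AE x in M. (\<lambda>j. f (r j) x) \<longlonglongrightarrow> F x"
    using AEconv by eventually_elim (simp add: F_def convergent_LIMSEQ_iff)
  have bnd: "\<And>i. AE x in M. norm (f (r i) x) \<le> 1" using fb by (intro AE_I2) auto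
  have intF': "integrable M F"
    by (rule integrable_dominated_convergence[where w="\<lambda>x. 1" and s="\<lambda>j. f (r j)"])
      (use FM fm AElim bnd in auto)
  have "(\<lambda>j. \<integral>x. f (r j) x \<partial>M) \<longlonglongrightarrow> (\<integral>x. F x \<partial>M)"
    by (rule integral_dominated_convergence[where w="\<lambda>x. 1"]) (use FM fm AElim bnd in auto)
  then have intF: "(\<integral>x. F x \<partial>M) = c" using mean by (simp add: LIMSEQ_const_iff)
  have intFc: "(\<integral>x. F x - c \<partial>M) = 0" using intF intF' by (simp add: prob_space)
  have intFc': "integrable M (\<lambda>x. F x - c)" using intF' by simp
  have intcF: "(\<integral>x. c - F x \<partial>M) = 0" using intF intF' by (simp add: prob_space)
  have intcF': "integrable M (\<lambda>x. c - F x)" using intF' by simp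
  have S1: "{x\<in>space M. c < F x} \<in> sets M" using FM by measurable
  have S2: "{x\<in>space M. F x < c} \<in> sets M" using FM by measurable
  have m1: "measure M {x\<in>space M. c < F x} = 0"
  proof (rule ccontr)
    assume "measure M {x\<in>space M. c < F x} \<noteq> 0"
    with erg[OF rmono] have "measure M {x\<in>space M. c < F x} = 1" by (auto simp: F_def)
    then have A1: "AE x in M. c < F x" by (auto dest: AE_prob_1)
    then have "AE x in M. 0 \<le> F x - c" by eventually_elim auto
    with intFc intFc' have "AE x in M. F x - c = 0" by (simp add: integral_nonneg_eq_0_iff_AE)
    with A1 have "AE x in M. False" by eventually_elim auto
    then show False by simp
  qed
  have m2: "measure M {x\<in>space M. F x < c} = 0"
  proof (rule ccontr)
    assume "measure M {x\<in>space M. F x < c} \<noteq> 0"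
    with erg[OF rmono] have "measure M {x\<in>space M. F x < c} = 1" by (auto simp: F_def)
    then have A1: "AE x in M. F x < c" by (auto dest: AE_prob_1)
    then have "AE x in M. 0 \<le> c - F x" by eventually_elim auto
    with intcF intcF' have "AE x in M. c - F x = 0" by (simp add: integral_nonneg_eq_0_iff_AE)
    with A1 have "AE x in M. False" by eventually_elim auto
    then show False by simp
  qed
  have "AE x in M. \<not> c < F x"
    using AE_iff_measurable[OF S1, of "\<lambda>x. \<not> c < F x"] m1 by (simp add: emeasure_eq_measure)
  moreover have "AE x in M. \<not> F x < c"
    using AE_iff_measurable[OF S2, of "\<lambda>x. \<not> F x < c"] m2 by (simp add: emeasure_eq_measure)
  ultimately have AEc: "AE x in M. F x = c" by eventually_elim auto
  have "(\<lambda>j. \<integral>x. (f (r j) x - c)^2 \<partial>M) \<longlonglongrightarrow> (\<integral>x. 0 \<partial>M)"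
  proof (rule integral_dominated_convergence[where w="\<lambda>x. 1"])
    show "AE x in M. (\<lambda>j. (f (r j) x - c)^2) \<longlonglongrightarrow> 0"
      using AElim AEc
    proof eventually_elim
      fix x assume "(\<lambda>j. f (r j) x) \<longlonglongrightarrow> F x" "F x = c"
      then have "(\<lambda>j. (f (r j) x - c)^2) \<longlonglongrightarrow> (c - c)^2" by (intro tendsto_intros) auto
      then show "(\<lambda>j. (f (r j) x - c)^2) \<longlonglongrightarrow> 0" by simp
    qed
    fix j show "AE x in M. norm ((f (r j) x - c)^2) \<le> 1"
    proof (rule AE_I2)
      fix x assume x: "x \<in> space M"
      have c01: "0 \<le> c" "c \<le> 1"
      proof -
        have "0 \<le> (\<integral>x. f 0 x \<partial>M)" using fb by (intro integral_nonneg_AE AE_I2) auto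
        then show "0 \<le> c" using mean by simp
        have "(\<integral>x. f 0 x \<partial>M) \<le> (\<integral>x. 1 \<partial>M)"
          using fb intf by (intro integral_mono) auto
        then show "c \<le> 1" using mean by (simp add: prob_space)
      qed
      have "\<bar>f (r j) x - c\<bar> \<le> 1" using fb[OF x, of "r j"] c01 by auto
      then have "\<bar>f (r j) x - c\<bar>^2 \<le> 1^2" by (intro power_mono) auto
      then show "norm ((f (r j) x - c)^2) \<le> 1" by simp
    qed
  qed (use fm in auto)
  then have "(\<lambda>j. e (r j) - c^2) \<longlonglongrightarrow> 0" using cvar by simp
  then have "(\<lambda>j. e (r j) - c^2 + c^2) \<longlonglongrightarrow> 0 + c^2" by (intro tendsto_intros)
  then have "(e \<circ> r) \<longlonglongrightarrow> c^2" by (simp add: o_def)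
  moreover have "(e \<circ> r) \<longlonglongrightarrow> L" using LIMSEQ_subseq_LIMSEQ[OF eL rmono] .
  ultimately have Lc: "L = c^2" using LIMSEQ_unique by blast
  have "(\<lambda>n. e n - c^2) \<longlonglongrightarrow> L - c^2" using eL by (intro tendsto_intros)
  then have sq0: "(\<lambda>n. \<integral>x. (f n x - c)^2 \<partial>M) \<longlonglongrightarrow> 0" using Lc cvar by simp
  have sqr0: "(\<lambda>n. sqrt (\<integral>x. (f n x - c)^2 \<partial>M)) \<longlonglongrightarrow> 0"
    using tendsto_real_sqrt[OF sq0] by simp
  show ?thesis
  proof (rule real_tendsto_sandwich[OF _ _ tendsto_const sqr0])
    show "\<forall>\<^sub>F n in sequentially. 0 \<le> (\<integral>x. \<bar>f n x - c\<bar> \<partial>M)"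
      by (intro always_eventually allI integral_nonneg_AE) auto
    show "\<forall>\<^sub>F n in sequentially. (\<integral>x. \<bar>f n x - c\<bar> \<partial>M) \<le> sqrt (\<integral>x. (f n x - c)^2 \<partial>M)"
    proof (intro always_eventually allI real_le_rsqrt sq_abs_le)
      fix n x assume x: "x \<in> space M"
      have c01: "0 \<le> c" "c \<le> 1"
      proof -
        have "0 \<le> (\<integral>x. f 0 x \<partial>M)" using fb by (intro integral_nonneg_AE AE_I2) auto
        then show "0 \<le> c" using mean by simp
        have "(\<integral>x. f 0 x \<partial>M) \<le> (\<integral>x. 1 \<partial>M)"
          using fb intf by (intro integral_mono) auto
        then show "c \<le> 1" using mean by (simp add: prob_space)
      qed
      show "\<bar>f n x - c\<bar> \<le> 1" using fb[OF x, of n] c01 by auto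
    qed (use fm in auto)
  qed
qed



definition pre :: "nat \<Rightarrow> (nat \<Rightarrow> 'e) \<Rightarrow> (nat \<Rightarrow> 'e)" where
  "pre n x = restrict x {..<n}"
definition spl :: "nat \<Rightarrow> (nat \<Rightarrow> 'e) \<Rightarrow> (nat \<Rightarrow> 'e) \<Rightarrow> (nat \<Rightarrow> 'e)" where
  "spl n p x = (\<lambda>i. if i < n then p i else x i)"
definition swp :: "nat \<Rightarrow> (nat \<Rightarrow> 'e) \<Rightarrow> (nat \<Rightarrow> 'e) \<Rightarrow> (nat \<Rightarrow> 'e) \<Rightarrow> (nat \<Rightarrow> 'e)" where
  "swp n p q x = (if pre n x = p then spl n q x else if pre n x = q then spl n p x else x)"

lemma pre_eq_iff: "pre n x = pre n y \<longleftrightarrow> (\<forall>i<n. x i = y i)"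
  unfolding pre_def by (metis lessThan_iff restrict_apply' restrict_ext)

lemma pre_spl_gen: "pre n (spl n (pre n z) x) = pre n z"
  unfolding pre_eq_iff by (simp add: spl_def pre_def)

lemma spl_pre: "pre n x = p \<Longrightarrow> spl n p x = x"
  unfolding spl_def pre_def by auto

lemma spl_spl: "spl n p (spl n q x) = spl n p x"
  unfolding spl_def by auto

locale BD =
  fixes V :: "nat \<Rightarrow> 'v set" and E :: "nat \<Rightarrow> 'e set"
    and src rng :: "'e \<Rightarrow> 'v" and v0 :: 'v
  assumes br: "bratteli V E src rng v0"
begin

abbreviation "X \<equiv> path_space E src rng v0"
abbreviation "T \<equiv> path_topology E src rng v0"
abbreviation "PT \<equiv> product_topology (\<lambda>i. discrete_topology (E (Suc i))) UNIV"

lemma topT: "topspace T = X"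
  by (auto simp: path_topology_def path_space_def topspace_product_topology PiE_def extensional_def)

lemma inX: "x \<in> X \<Longrightarrow> x i \<in> E (Suc i)"
  by (simp add: path_space_def)

lemma srcV: assumes "x \<in> X" shows "src (x n) \<in> V n"
proof -
  have "\<forall>e\<in>E (Suc n). src e \<in> V (Suc n - 1)" using br unfolding bratteli_def
    by (metis le_add1 plus_1_eq_Suc)
  then show ?thesis using inX[OF assms, of n] by simp
qed

lemma fd_open:
  assumes S: "S \<subseteq> X" and det: "\<And>x y. x \<in> S \<Longrightarrow> y \<in> X \<Longrightarrow> \<forall>i<K. x i = y i \<Longrightarrow> y \<in> S"
  shows "openin T S"
proof -
  define U where "U = {y \<in> topspace PT. \<exists>x\<in>S. \<forall>i<K. x i = y i}"
  have "openin PT U"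
    unfolding openin_product_topology_alt
  proof (intro ballI)
    fix y assume y: "y \<in> U"
    then obtain x where x: "x \<in> S" "\<forall>i<K. x i = y i" and yt: "y \<in> topspace PT" by (auto simp: U_def)
    define W where "W i = (if i < K then {y i} else E (Suc i))" for i
    have yE: "y i \<in> E (Suc i)" for i using yt by (auto simp: topspace_product_topology)
    show "\<exists>W. finite {i \<in> UNIV. W i \<noteq> topspace (discrete_topology (E (Suc i)))} \<and>
         (\<forall>i\<in>UNIV. openin (discrete_topology (E (Suc i))) (W i)) \<and> y \<in> Pi\<^sub>E UNIV W \<and> Pi\<^sub>E UNIV W \<subseteq> U"
    proof (intro exI[of _ W] conjI ballI)
      show "finite {i \<in> UNIV. W i \<noteq> topspace (discrete_topology (E (Suc i)))}"
        by (rule finite_subset[of _ "{..<K}"]) (auto simp: W_def split: if_splits)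
      show "openin (discrete_topology (E (Suc i))) (W i)" for i using yE by (auto simp: W_def)
      show "y \<in> Pi\<^sub>E UNIV W" using yE by (auto simp: W_def)
      show "Pi\<^sub>E UNIV W \<subseteq> U"
      proof
        fix z assume z: "z \<in> Pi\<^sub>E UNIV W"
        have "z i \<in> E (Suc i)" for i using z yE[of i] by (cases "i < K") (auto simp: W_def PiE_def Pi_def split: if_splits)
        then have "z \<in> topspace PT" by (auto simp: topspace_product_topology)
        moreover have "\<forall>i<K. x i = z i"
        proof (intro allI impI)
          fix i assume "i < K"
          have "z i \<in> W i" using z by (auto simp: PiE_def)
          then show "x i = z i" using x \<open>i < K\<close> by (simp add: W_def)
        qed
        ultimately show "z \<in> U" using x by (auto simp: U_def)
      qed
    qed
  qed
  moreover have "S = U \<inter> X"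
  proof
    show "S \<subseteq> U \<inter> X" using S topT by (auto simp: U_def path_topology_def)
    show "U \<inter> X \<subseteq> S" using det by (auto simp: U_def)
  qed
  ultimately show ?thesis unfolding path_topology_def openin_subtopology by blast
qed

lemma fd_open2:
  assumes "\<And>x y. x \<in> X \<Longrightarrow> y \<in> X \<Longrightarrow> \<forall>i<K. x i = y i \<Longrightarrow> P x \<Longrightarrow> P y"
  shows "openin T {x\<in>X. P x}"
  by (rule fd_open[of _ K]) (use assms in auto)

lemma fd_sets:
  assumes mu: "borel_prob T \<mu>"
    and "\<And>x y. x \<in> X \<Longrightarrow> y \<in> X \<Longrightarrow> \<forall>i<K. x i = y i \<Longrightarrow> P x \<Longrightarrow> P y"
  shows "{x\<in>X. P x} \<in> sets \<mu>"
proof -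
  have "openin T {x\<in>X. P x}" by (rule fd_open2) (use assms in auto)
  then show ?thesis using mu by (auto simp: borel_prob_def topT intro: sigma_sets.Basic)
qed

lemma fd_meas:
  assumes mu: "borel_prob T \<mu>"
    and "\<And>x y. x \<in> X \<Longrightarrow> y \<in> X \<Longrightarrow> \<forall>i<K. x i = y i \<Longrightarrow> h x = h y"
  shows "h \<in> borel_measurable \<mu>"
proof (rule borel_measurableI)
  fix S
  have "{x\<in>X. h x \<in> S} \<in> sets \<mu>"
  proof (rule fd_sets[OF mu, of K])
    fix x y assume "x \<in> X" "y \<in> X" "\<forall>i<K. x i = y i" "h x \<in> S"
    then show "h y \<in> S" using assms(2)[of x y] by simp
  qed
  moreover have "h -` S \<inter> space \<mu> = {x\<in>X. h x \<in> S}" using mu by (auto simp: borel_prob_def topT)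
  ultimately show "h -` S \<inter> space \<mu> \<in> sets \<mu>" by simp
qed

lemma clopen_fd:
  assumes cs: "compact_space T" and cl: "clopen_in T A"
  shows "\<exists>m. \<forall>x y. x \<in> A \<longrightarrow> y \<in> X \<longrightarrow> (\<forall>i<m. x i = y i) \<longrightarrow> y \<in> A"
proof -
  have opA: "openin T A" and clA: "closedin T A" using cl by (auto simp: clopen_in_def)
  have AX: "A \<subseteq> X" using openin_subset[OF opA] topT by simp
  have loc: "\<exists>K. \<forall>y\<in>X. (\<forall>i<K. x i = y i) \<longrightarrow> y \<in> A" if xA: "x \<in> A" for x
  proof -
    obtain U where U: "openin PT U" "A = U \<inter> X"
      using opA unfolding path_topology_def openin_subtopology by blast
    have "x \<in> U" using xA U by auto
    then obtain W where W: "finite {i \<in> UNIV. W i \<noteq> topspace (discrete_topology (E (Suc i)))}"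
      "x \<in> Pi\<^sub>E UNIV W" "Pi\<^sub>E UNIV W \<subseteq> U"
      using U(1) unfolding openin_product_topology_alt by blast
    obtain K where K: "{i \<in> UNIV. W i \<noteq> topspace (discrete_topology (E (Suc i)))} \<subseteq> {..<K}"
      using finite_nat_bounded[OF W(1)] by blast
    show ?thesis
    proof (intro exI[of _ K] ballI impI)
      fix y assume y: "y \<in> X" "\<forall>i<K. x i = y i"
      have "y i \<in> W i" for i
      proof (cases "i < K")
        case True
        have "x i \<in> W i" using W(2) by (auto simp: PiE_def Pi_def)
        then show ?thesis using y(2) True by metis
      next
        case False then have "W i = E (Suc i)" using K by auto
        then show ?thesis using inX[OF y(1)] by simp
      qed
      then have "y \<in> Pi\<^sub>E UNIV W" by auto
      then show "y \<in> A" using W(3) U(2) y(1) by auto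
    qed
  qed
  then obtain Kf where Kf: "\<And>x y. x \<in> A \<Longrightarrow> y \<in> X \<Longrightarrow> \<forall>i<Kf x. x i = y i \<Longrightarrow> y \<in> A"
    by metis
  define Cy where "Cy x = {y\<in>X. \<forall>i<Kf x. x i = y i}" for x
  have opO: "openin T (Cy x)" for x unfolding Cy_def by (rule fd_open2[of "Kf x"]) auto
  have "compactin T A" by (rule closedin_compact_space[OF cs clA])
  moreover have "\<forall>U\<in>Cy ` A. openin T U" using opO by auto
  moreover have "A \<subseteq> \<Union> (Cy ` A)" using AX by (auto simp: Cy_def)
  ultimately obtain \<F> where F: "finite \<F>" "\<F> \<subseteq> Cy ` A" "A \<subseteq> \<Union> \<F>"
    unfolding compactin_def by meson
  then obtain F where F2: "F \<subseteq> A" "finite F" "\<F> = Cy ` F" by (meson finite_subset_image)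
  show ?thesis
  proof (intro exI[of _ "\<Sum>z\<in>F. Kf z"] allI impI)
    fix x y assume x: "x \<in> A" and y: "y \<in> X" and agr: "\<forall>i<(\<Sum>z\<in>F. Kf z). x i = y i"
    obtain z where z: "z \<in> F" "x \<in> Cy z" using F(3) F2(3) x by auto
    have "Kf z \<le> (\<Sum>z\<in>F. Kf z)" using F2(2) z(1) by (simp add: member_le_sum)
    then have "\<forall>i<Kf z. z i = y i" using z(2) agr by (auto simp: Cy_def)
    then show "y \<in> A" using Kf[of z y] z(1) F2(1) y by auto
  qed
qed

lemma splice_X:
  assumes x: "x \<in> X" and z: "z \<in> X" and w: "src (x n) = src (z n)"
  shows "(\<lambda>i. if i < n then z i else x i) \<in> X"
proof -
  have xp: "\<forall>i. x i \<in> E (Suc i)" "src (x 0) = v0" "\<forall>i. rng (x i) = src (x (Suc i))"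
    using x by (auto simp: path_space_def)
  have zp: "\<forall>i. z i \<in> E (Suc i)" "src (z 0) = v0" "\<forall>i. rng (z i) = src (z (Suc i))"
    using z by (auto simp: path_space_def)
  have "rng (if i < n then z i else x i) = src (if Suc i < n then z (Suc i) else x (Suc i))" for i
  proof -
    consider "Suc i < n" | "Suc i = n" | "n \<le> i" by linarith
    then show ?thesis
    proof cases
      case 3 then show ?thesis using xp by auto
    next
      case 2 then show ?thesis using zp w by auto
    next
      case 1 then show ?thesis using zp by auto
    qed
  qed
  then show ?thesis using xp zp by (auto simp: path_space_def)
qed

lemma cont_local:
  assumes gX: "\<And>x. x \<in> X \<Longrightarrow> g x \<in> X"
    and loc: "\<And>k. \<exists>K. \<forall>x\<in>X. \<forall>y\<in>X. (\<forall>i<K. x i = y i) \<longrightarrow> (\<forall>i<k. g x i = g y i)"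
  shows "continuous_map T T g"
proof -
  have "continuous_map T PT g"
    unfolding continuous_map_componentwise_UNIV
  proof
    fix k
    obtain K where K: "\<forall>x\<in>X. \<forall>y\<in>X. (\<forall>i<K. x i = y i) \<longrightarrow> (\<forall>i<Suc k. g x i = g y i)"
      using loc by blast
    show "continuous_map T (discrete_topology (E (Suc k))) (\<lambda>x. g x k)"
      unfolding continuous_map_def
    proof (intro conjI allI impI)
      show "(\<lambda>x. g x k) \<in> topspace T \<rightarrow> topspace (discrete_topology (E (Suc k)))"
        using gX inX by (auto simp: topT)
      fix U assume "openin (discrete_topology (E (Suc k))) U"
      show "openin T {x \<in> topspace T. g x k \<in> U}"
        unfolding topT
      proof (rule fd_open2[of K])
        fix x y assume "x \<in> X" "y \<in> X" "\<forall>i<K. x i = y i" "g x k \<in> U"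
        then show "g y k \<in> U" using K[rule_format, of x y k] by auto
      qed
    qed
  qed
  then have "continuous_map T (subtopology PT X) g"
    using gX by (auto simp: continuous_map_in_subtopology topT)
  then show ?thesis by (simp add: path_topology_def)
qed

definition P :: "nat \<Rightarrow> 'v \<Rightarrow> (nat \<Rightarrow> 'e) set" where
  "P n w = pre n ` {x\<in>X. src (x n) = w}"

lemma pre_src:
  assumes "x \<in> X" "y \<in> X" "pre n x = pre n y"
  shows "src (x n) = src (y n)"
proof (cases n)
  case 0 then show ?thesis using assms by (auto simp: path_space_def)
next
  case (Suc k)
  then have "x k = y k" using assms(3) unfolding pre_eq_iff by auto
  then show ?thesis using assms(1,2) Suc by (auto simp: path_space_def) (metis)
qed

lemma P_src: assumes "p \<in> P n w" "x \<in> X" "pre n x = p" shows "src (x n) = w"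
proof -
  obtain z where z: "z \<in> X" "src (z n) = w" "p = pre n z" using assms(1) unfolding P_def by auto
  then show ?thesis using pre_src[of x z n] assms by auto
qed

lemma spl_X: "p \<in> P n w \<Longrightarrow> x \<in> X \<Longrightarrow> src (x n) = w \<Longrightarrow> spl n p x \<in> X"
  unfolding P_def
proof (elim imageE)
  fix z assume z: "z \<in> {x \<in> X. src (x n) = w}" "p = pre n z" and x: "x \<in> X" "src (x n) = w"
  have "spl n p x = (\<lambda>i. if i < n then z i else x i)" using z by (auto simp: spl_def pre_def)
  then show "spl n p x \<in> X" using splice_X[of x z n] z x by auto
qed

lemma pre_spl: "p \<in> P n w \<Longrightarrow> pre n (spl n p x) = p"
  unfolding P_def using pre_spl_gen by blast

lemma swp_props:
  assumes p: "p \<in> P n w" and q: "q \<in> P n w"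
  shows "\<And>x::nat\<Rightarrow>'e. x \<in> X \<Longrightarrow> swp n p q x \<in> X"
    and "\<And>x::nat\<Rightarrow>'e. x \<in> X \<Longrightarrow> swp n p q (swp n p q x) = x"
    and "\<And>x::nat\<Rightarrow>'e. x \<in> X \<Longrightarrow> pre n (swp n p q x) = p \<longleftrightarrow> pre n x = q"
    and "swp n p q \<in> Gn T n"
proof -
  show sX: "swp n p q x \<in> X" if x: "x \<in> X" for x
  proof -
    consider "pre n x = p" | "pre n x \<noteq> p" "pre n x = q" | "pre n x \<noteq> p" "pre n x \<noteq> q" by blast
    then show ?thesis
    proof cases
      case 1 then show ?thesis using P_src[OF p x] spl_X[OF q x] by (simp add: swp_def)
    next
      case 2 then show ?thesis using P_src[OF q x] spl_X[OF p x] by (simp add: swp_def)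
    next
      case 3 then show ?thesis using x by (simp add: swp_def)
    qed
  qed
  show inv: "swp n p q (swp n p q x) = x" if x: "x \<in> X" for x
  proof -
    consider "pre n x = p" "p = q" | "pre n x = p" "p \<noteq> q" | "pre n x \<noteq> p" "pre n x = q"
      | "pre n x \<noteq> p" "pre n x \<noteq> q" by blast
    then show ?thesis
    proof cases
      case 1 then show ?thesis by (simp add: swp_def spl_pre)
    next
      case 2 then show ?thesis using pre_spl[OF q] by (simp add: swp_def spl_spl spl_pre)
    next
      case 3 then show ?thesis using pre_spl[OF p] by (simp add: swp_def spl_spl spl_pre)
    next
      case 4 then show ?thesis by (simp add: swp_def)
    qed
  qed
  show "pre n (swp n p q x) = p \<longleftrightarrow> pre n x = q" if x: "x \<in> X" for x
  proof -
    consider "pre n x = p" | "pre n x \<noteq> p" "pre n x = q" | "pre n x \<noteq> p" "pre n x \<noteq> q" by blast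
    then show ?thesis
    proof cases
      case 1 then show ?thesis using pre_spl[OF q] by (auto simp: swp_def)
    next
      case 2 then show ?thesis using pre_spl[OF p] by (auto simp: swp_def)
    next
      case 3 then show ?thesis by (auto simp: swp_def)
    qed
  qed
  have loc: "\<exists>K. \<forall>x\<in>X. \<forall>y\<in>X. (\<forall>i<K. x i = y i) \<longrightarrow> (\<forall>i<k. swp n p q x i = swp n p q y i)" for k
  proof (intro exI[of _ "max k n"] ballI impI allI)
    fix x y i assume "x \<in> X" "y \<in> X" and agr: "\<forall>i<max k n. x i = y i" and "i < k"
    have "pre n x = pre n y" unfolding pre_eq_iff using agr by auto
    then show "swp n p q x i = swp n p q y i" using agr \<open>i < k\<close> by (auto simp: swp_def spl_def)
  qed
  have cont: "continuous_map T T (swp n p q)" by (rule cont_local[OF sX loc])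
  have "homeomorphic_map T T (swp n p q)"
    unfolding homeomorphic_map_maps homeomorphic_maps_def
    using cont inv by (auto simp: topT intro!: exI[of _ "swp n p q"])
  moreover have "\<forall>x\<in>topspace T. \<forall>i\<ge>n. swp n p q x i = x i" by (auto simp: swp_def spl_def)
  moreover have "\<forall>x\<in>topspace T. \<forall>y\<in>topspace T. (\<forall>i<n. x i = y i) \<longrightarrow> (\<forall>i<n. swp n p q x i = swp n p q y i)"
  proof (intro ballI impI allI)
    fix x y :: "nat \<Rightarrow> 'e" and i assume agr: "\<forall>i<n. x i = y i" and "i < n"
    have "pre n x = pre n y" unfolding pre_eq_iff using agr by auto
    then show "swp n p q x i = swp n p q y i" using agr \<open>i < n\<close> by (auto simp: swp_def spl_def)
  qed
  ultimately show "swp n p q \<in> Gn T n" unfolding Gn_def by blast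
qed


lemma tail_inv:
  assumes SX: "S \<subseteq> X" and det: "\<And>x y. x \<in> X \<Longrightarrow> y \<in> X \<Longrightarrow> \<forall>i\<ge>n. x i = y i \<Longrightarrow> x \<in> S \<Longrightarrow> y \<in> S"
  shows "invariant_set (Gn T n) S"
  unfolding invariant_set_def
proof
  fix g assume g: "g \<in> Gn T n"
  then have hm: "homeomorphic_map T T g" and fx: "\<forall>x\<in>X. \<forall>i\<ge>n. g x i = x i"
    by (auto simp: Gn_def topT)
  have surj: "g ` X = X" using homeomorphic_imp_surjective_map[OF hm] topT by simp
  show "g ` S = S"
  proof
    show "g ` S \<subseteq> S"
    proof
      fix y assume "y \<in> g ` S"
      then obtain x where x: "x \<in> S" "y = g x" by auto
      have xX: "x \<in> X" using x SX by auto
      then have "g x \<in> X" using surj by auto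
      then show "y \<in> S" using det[of x "g x"] xX x fx by auto
    qed
    show "S \<subseteq> g ` S"
    proof
      fix y assume y: "y \<in> S"
      then have "y \<in> g ` X" using SX surj by auto
      then obtain x where x: "x \<in> X" "y = g x" by auto
      have "x \<in> S" using det[of y x] x y SX fx by auto
      then show "y \<in> g ` S" using x by auto
    qed
  qed
qed

lemma Gn_full: "Gn T n \<subseteq> full_group T"
  unfolding full_group_def by auto

lemma finE: "finite (E n)" using br by (auto simp: bratteli_def)
lemma finV: "finite (V n)" using br by (auto simp: bratteli_def)

lemma finP: "finite (P n w)"
proof (rule finite_subset)
  show "P n w \<subseteq> Pi\<^sub>E {..<n} (\<lambda>i. E (Suc i))"
  proof
    fix p assume "p \<in> P n w"
    then obtain x where x: "x \<in> X" "p = restrict x {..<n}" by (auto simp: P_def pre_def)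
    have "restrict x {..<n} \<in> Pi\<^sub>E {..<n} (\<lambda>i. E (Suc i))"
      by (simp only: restrict_PiE_iff) (auto simp: inX[OF x(1)])
    then show "p \<in> Pi\<^sub>E {..<n} (\<lambda>i. E (Suc i))" using x by simp
  qed
  show "finite (Pi\<^sub>E {..<n} (\<lambda>i. E (Suc i)))" by (intro finite_PiE) (auto simp: finE)
qed

end

locale BDM = BD V E src rng v0
  for V :: "nat \<Rightarrow> 'v set" and E :: "nat \<Rightarrow> 'e set"
    and src rng :: "'e \<Rightarrow> 'v" and v0 :: 'v +
  fixes \<mu> :: "(nat \<Rightarrow> 'e) measure" and A :: "(nat \<Rightarrow> 'e) set" and m :: nat
  assumes mu: "borel_prob T \<mu>" and minv: "invariant_measure (full_group T) \<mu>"
    and AX: "A \<subseteq> X" and Adet: "\<And>x y. x \<in> A \<Longrightarrow> y \<in> X \<Longrightarrow> \<forall>i<m. x i = y i \<Longrightarrow> y \<in> A"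
begin

lemma ps: "prob_space \<mu>" and sp: "space \<mu> = X"
  using mu by (auto simp: borel_prob_def topT)

definition C :: "nat \<Rightarrow> 'v \<Rightarrow> (nat \<Rightarrow> 'e) set" where "C n w = {x\<in>X. src (x n) = w}"
definition Cyl :: "nat \<Rightarrow> (nat \<Rightarrow> 'e) \<Rightarrow> (nat \<Rightarrow> 'e) set" where "Cyl n p = {x\<in>X. pre n x = p}"
definition PA :: "nat \<Rightarrow> 'v \<Rightarrow> (nat \<Rightarrow> 'e) set" where "PA n w = {p \<in> P n w. \<exists>x\<in>A. pre n x = p}"
definition phi :: "nat \<Rightarrow> 'v \<Rightarrow> real" where "phi n w = real (card (PA n w)) / real (card (P n w))"
definition f :: "nat \<Rightarrow> (nat \<Rightarrow> 'e) \<Rightarrow> real" where "f n x = phi n (src (x n))"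

lemma C_sets: "C n w \<in> sets \<mu>"
  unfolding C_def by (rule fd_sets[OF mu, of "Suc n"]) auto

lemma Cyl_sets: "Cyl n p \<in> sets \<mu>"
  unfolding Cyl_def by (rule fd_sets[OF mu, of n]) (auto simp: pre_eq_iff)

lemma A_sets: "A \<in> sets \<mu>"
proof -
  have "{x\<in>X. x \<in> A} \<in> sets \<mu>" by (rule fd_sets[OF mu, of m]) (use Adet in auto)
  moreover have "{x\<in>X. x \<in> A} = A" using AX by auto
  ultimately show ?thesis by simp
qed

lemma f_meas: "f n \<in> borel_measurable \<mu>"
  unfolding f_def by (rule fd_meas[OF mu, of "Suc n"]) auto

lemma phi_bnd: "0 \<le> phi n w \<and> phi n w \<le> 1"
proof -
  have "card (PA n w) \<le> card (P n w)" by (rule card_mono[OF finP]) (auto simp: PA_def)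
  then have le: "real (card (PA n w)) \<le> real (card (P n w))" by simp
  show ?thesis
  proof (cases "card (P n w) = 0")
    case True then show ?thesis by (simp add: phi_def)
  next
    case False then have "real (card (P n w)) > 0" by simp
    then show ?thesis using le unfolding phi_def by (simp add: divide_le_eq_1)
  qed
qed

lemma f_bnd: "0 \<le> f n x \<and> f n x \<le> 1" unfolding f_def using phi_bnd by auto

lemma C_sub: "C n w \<subseteq> X" by (auto simp: C_def)
lemma Cyl_sub: "Cyl n p \<subseteq> X" by (auto simp: Cyl_def)

lemma swap_meas:
  assumes p: "p \<in> P n w" and q: "q \<in> P n w" and S: "S \<in> sets \<mu>" "S \<subseteq> X"
    and Si: "invariant_set (Gn T n) S"
  shows "measure \<mu> (Cyl n p \<inter> S) = measure \<mu> (Cyl n q \<inter> S)"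
proof -
  define g where "g = swp n p q"
  have gG: "g \<in> Gn T n" unfolding g_def by (rule swp_props(4)[OF p q])
  then have gF: "g \<in> full_group T" using Gn_full by auto
  have gX: "\<And>x. x \<in> X \<Longrightarrow> g x \<in> X" unfolding g_def by (rule swp_props(1)[OF p q])
  have gi: "\<And>x. x \<in> X \<Longrightarrow> g (g x) = x" unfolding g_def by (rule swp_props(2)[OF p q])
  have gp: "\<And>x. x \<in> X \<Longrightarrow> pre n (g x) = p \<longleftrightarrow> pre n x = q" unfolding g_def by (rule swp_props(3)[OF p q])
  have gS: "g ` S = S" using Si gG by (auto simp: invariant_set_def)
  have gSi: "g x \<in> S \<longleftrightarrow> x \<in> S" if x: "x \<in> X" for x
  proof
    assume "g x \<in> S" then have "g (g x) \<in> g ` S" by blast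
    then show "x \<in> S" using gS gi[OF x] by simp
  next
    assume "x \<in> S" then show "g x \<in> S" using gS by blast
  qed
  have ps_sets: "Cyl n p \<inter> S \<in> sets \<mu>" using Cyl_sets S by auto
  have "measure \<mu> (g -` (Cyl n p \<inter> S) \<inter> space \<mu>) = measure \<mu> (Cyl n p \<inter> S)"
    using minv gF ps_sets unfolding invariant_measure_def by blast
  moreover have "g -` (Cyl n p \<inter> S) \<inter> space \<mu> = Cyl n q \<inter> S"
    using gX gSi gp S(2) by (auto simp: sp Cyl_def)
  ultimately show ?thesis by simp
qed

lemma C_Union: "C n w = (\<Union>p\<in>P n w. Cyl n p)"
proof
  show "C n w \<subseteq> (\<Union>p\<in>P n w. Cyl n p)"
  proof
    fix x assume x: "x \<in> C n w"
    then have "pre n x \<in> P n w" by (auto simp: C_def P_def)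
    then show "x \<in> (\<Union>p\<in>P n w. Cyl n p)" using x by (auto simp: Cyl_def C_def)
  qed
  show "(\<Union>p\<in>P n w. Cyl n p) \<subseteq> C n w"
    using P_src by (auto simp: Cyl_def C_def)
qed

lemma Cyl_disj: "disjoint_family_on (\<lambda>p. Cyl n p \<inter> S) Q"
  by (auto simp: disjoint_family_on_def Cyl_def)

lemma AC_Union: assumes "m \<le> n" shows "A \<inter> C n w = (\<Union>p\<in>PA n w. Cyl n p)"
proof
  show "A \<inter> C n w \<subseteq> (\<Union>p\<in>PA n w. Cyl n p)"
  proof
    fix x assume x: "x \<in> A \<inter> C n w"
    then have "pre n x \<in> PA n w" by (auto simp: C_def P_def PA_def)
    then show "x \<in> (\<Union>p\<in>PA n w. Cyl n p)" using x by (auto simp: Cyl_def C_def)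
  qed
  show "(\<Union>p\<in>PA n w. Cyl n p) \<subseteq> A \<inter> C n w"
  proof
    fix x assume "x \<in> (\<Union>p\<in>PA n w. Cyl n p)"
    then obtain p y where p: "p \<in> P n w" "y \<in> A" "pre n y = p" "x \<in> X" "pre n x = p"
      by (auto simp: PA_def Cyl_def)
    then have "pre n y = pre n x" by simp
    then have "\<forall>i<n. y i = x i" by (simp only: pre_eq_iff)
    then have "\<forall>i<m. y i = x i" using assms by auto
    then have "x \<in> A" using Adet p by blast
    moreover have "x \<in> C n w" using P_src p by (auto simp: C_def)
    ultimately show "x \<in> A \<inter> C n w" by auto
  qed
qed

lemma KW:
  assumes mn: "m \<le> n" and S: "S \<in> sets \<mu>" "S \<subseteq> X" and Si: "invariant_set (Gn T n) S"
  shows "phi n w * measure \<mu> (C n w \<inter> S) = measure \<mu> (A \<inter> C n w \<inter> S)"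
proof (cases "P n w = {}")
  case True
  then have "C n w = {}" using C_Union by auto
  then show ?thesis by simp
next
  case False
  interpret prob_space \<mu> by (rule ps)
  obtain p0 where p0: "p0 \<in> P n w" using False by auto
  define s where "s = measure \<mu> (Cyl n p0 \<inter> S)"
  have eqs: "\<And>p. p \<in> P n w \<Longrightarrow> measure \<mu> (Cyl n p \<inter> S) = s"
    unfolding s_def using swap_meas[OF _ p0 S Si] by blast
  have cs: "\<And>Q. (\<lambda>p. Cyl n p \<inter> S) ` Q \<subseteq> sets \<mu>" using Cyl_sets S by auto
  have "C n w \<inter> S = (\<Union>p\<in>P n w. Cyl n p \<inter> S)" using C_Union by auto
  then have m1: "measure \<mu> (C n w \<inter> S) = (\<Sum>p\<in>P n w. measure \<mu> (Cyl n p \<inter> S))"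
    using finite_measure_finite_Union[OF finP cs Cyl_disj] by simp
  also have "\<dots> = real (card (P n w)) * s" using eqs by simp
  finally have m1: "measure \<mu> (C n w \<inter> S) = real (card (P n w)) * s" .
  have fPA: "finite (PA n w)" using finP by (rule finite_subset[rotated]) (auto simp: PA_def)
  have "A \<inter> C n w \<inter> S = (\<Union>p\<in>PA n w. Cyl n p \<inter> S)" using AC_Union[OF mn] by auto
  then have "measure \<mu> (A \<inter> C n w \<inter> S) = (\<Sum>p\<in>PA n w. measure \<mu> (Cyl n p \<inter> S))"
    using finite_measure_finite_Union[OF fPA cs Cyl_disj] by simp
  also have "\<dots> = real (card (PA n w)) * s" using eqs by (simp add: PA_def)
  finally have m2: "measure \<mu> (A \<inter> C n w \<inter> S) = real (card (PA n w)) * s" .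
  have "card (P n w) \<noteq> 0" using False finP by auto
  then show ?thesis using m1 m2 by (simp add: phi_def)
qed

lemma EXP: assumes x: "x \<in> X" shows "f k x = (\<Sum>w\<in>V k. phi k w * indicator (C k w) x)"
proof -
  have "(\<Sum>w\<in>V k. phi k w * indicator (C k w) x) = (\<Sum>w\<in>V k. if w = src (x k) then phi k w else 0)"
    using x by (intro sum.cong) (auto simp: C_def indicator_def)
  also have "\<dots> = phi k (src (x k))" using srcV[OF x] finV by simp
  finally show ?thesis by (simp add: f_def)
qed

lemma int_gC:
  fixes g :: "(nat \<Rightarrow> 'e) \<Rightarrow> real" and c :: real
  assumes gm: "g \<in> borel_measurable \<mu>" and gb: "\<And>x. x \<in> X \<Longrightarrow> \<bar>g x\<bar> \<le> 1"
  shows "integrable \<mu> (\<lambda>x. c * (g x * indicator (C k w) x))"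
proof -
  interpret prob_space \<mu> by (rule ps)
  have m: "(\<lambda>x. c * (g x * indicator (C k w) x)) \<in> borel_measurable \<mu>"
    using gm C_sets by (intro borel_measurable_times borel_measurable_const borel_measurable_indicator)
  show ?thesis
  proof (rule int_bdd[OF m, where B="\<bar>c\<bar>"])
    fix x assume "x \<in> space \<mu>"
    then have "\<bar>g x\<bar> \<le> 1" using gb sp by auto
    then show "\<bar>c * (g x * indicator (C k w) x)\<bar> \<le> \<bar>c\<bar>"
      by (auto simp: abs_mult indicator_def intro: mult_left_le)
  qed
qed

lemma INT:
  fixes g :: "(nat \<Rightarrow> 'e) \<Rightarrow> real"
  assumes gm: "g \<in> borel_measurable \<mu>" and gb: "\<And>x. x \<in> X \<Longrightarrow> \<bar>g x\<bar> \<le> 1"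
  shows "(\<integral>x. g x * f k x \<partial>\<mu>) = (\<Sum>w\<in>V k. phi k w * (\<integral>x. g x * indicator (C k w) x \<partial>\<mu>))"
proof -
  interpret prob_space \<mu> by (rule ps)
  have "(\<integral>x. g x * f k x \<partial>\<mu>) = (\<integral>x. (\<Sum>w\<in>V k. phi k w * (g x * indicator (C k w) x)) \<partial>\<mu>)"
  proof (rule Bochner_Integration.integral_cong[OF refl])
    fix x assume "x \<in> space \<mu>"
    then have "x \<in> X" by (simp add: sp)
    then show "g x * f k x = (\<Sum>w\<in>V k. phi k w * (g x * indicator (C k w) x))"
      by (simp add: EXP sum_distrib_left mult.left_commute)
  qed
  also have "\<dots> = (\<Sum>w\<in>V k. (\<integral>x. phi k w * (g x * indicator (C k w) x) \<partial>\<mu>))"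
    by (rule Bochner_Integration.integral_sum) (rule int_gC[OF gm gb])
  also have "\<dots> = (\<Sum>w\<in>V k. phi k w * (\<integral>x. g x * indicator (C k w) x \<partial>\<mu>))"
    by simp
  finally show ?thesis .
qed

lemma K:
  assumes mn: "m \<le> n" and S: "S \<in> sets \<mu>" "S \<subseteq> X" and Si: "invariant_set (Gn T n) S"
  shows "(\<integral>x. f n x * indicator S x \<partial>\<mu>) = measure \<mu> (A \<inter> S)"
proof -
  interpret prob_space \<mu> by (rule ps)
  have "(\<integral>x. f n x * indicator S x \<partial>\<mu>) = (\<integral>x. indicator S x * f n x \<partial>\<mu>)"
    by (simp add: mult.commute)
  also have "\<dots> = (\<Sum>w\<in>V n. phi n w * (\<integral>x. indicator S x * indicator (C n w) x \<partial>\<mu> :: real))"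
    by (rule INT) (use S in \<open>auto simp: indicator_def\<close>)
  also have "\<dots> = (\<Sum>w\<in>V n. phi n w * measure \<mu> (C n w \<inter> S))"
  proof (rule sum.cong[OF refl])
    fix w
    have "(\<integral>x. indicator S x * indicator (C n w) x \<partial>\<mu>) = (\<integral>x. indicator (C n w \<inter> S) x \<partial>\<mu> :: real)"
      by (intro Bochner_Integration.integral_cong) (auto simp: indicator_def)
    also have "\<dots> = measure \<mu> (C n w \<inter> S)" using C_sub by (simp add: sp Int_absorb2 inf.absorb1 le_infI1)
    finally show "phi n w * (\<integral>x. indicator S x * indicator (C n w) x \<partial>\<mu> :: real) = phi n w * measure \<mu> (C n w \<inter> S)"
      by simp
  qed
  also have "\<dots> = (\<Sum>w\<in>V n. measure \<mu> (A \<inter> C n w \<inter> S))"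
    using KW[OF mn S Si] by simp
  also have "\<dots> = measure \<mu> (\<Union>w\<in>V n. A \<inter> C n w \<inter> S)"
  proof (rule finite_measure_finite_Union[symmetric, OF finV])
    show "(\<lambda>w. A \<inter> C n w \<inter> S) ` V n \<subseteq> sets \<mu>" using A_sets C_sets S by auto
    show "disjoint_family_on (\<lambda>w. A \<inter> C n w \<inter> S) (V n)"
      by (auto simp: disjoint_family_on_def C_def)
  qed
  also have "(\<Union>w\<in>V n. A \<inter> C n w \<inter> S) = A \<inter> S"
    using AX srcV by (auto simp: C_def)
  finally show ?thesis .
qed

lemma C_inv: assumes "n \<le> k" shows "invariant_set (Gn T n) (C k w)"
  by (rule tail_inv[OF C_sub]) (use assms in \<open>auto simp: C_def\<close>)

lemma cross:
  assumes "m \<le> n" "n \<le> k"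
  shows "(\<integral>x. f n x * f k x \<partial>\<mu>) = (\<integral>x. (f k x)^2 \<partial>\<mu>)"
proof -
  have "(\<integral>x. f n x * f k x \<partial>\<mu>) = (\<Sum>w\<in>V k. phi k w * (\<integral>x. f n x * indicator (C k w) x \<partial>\<mu>))"
    by (rule INT[OF f_meas]) (use f_bnd in auto)
  also have "\<dots> = (\<Sum>w\<in>V k. phi k w * measure \<mu> (A \<inter> C k w))"
    using K[OF assms(1) C_sets C_sub C_inv[OF assms(2)]] by simp
  also have "\<dots> = (\<Sum>w\<in>V k. phi k w * (\<integral>x. f k x * indicator (C k w) x \<partial>\<mu>))"
    using K[OF order.trans[OF assms] C_sets C_sub C_inv[OF order.refl]] by simp
  also have "\<dots> = (\<integral>x. f k x * f k x \<partial>\<mu>)"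
    by (rule INT[OF f_meas, symmetric]) (use f_bnd in auto)
  finally show ?thesis by (simp add: power2_eq_square)
qed

lemma mean:
  assumes "m \<le> n"
  shows "(\<integral>x. f n x \<partial>\<mu>) = measure \<mu> A"
proof -
  interpret prob_space \<mu> by (rule ps)
  have Xs: "X \<in> sets \<mu>" using sets.top[of \<mu>] by (simp add: sp)
  have Xi: "invariant_set (Gn T n) X" by (rule tail_inv) auto
  have "(\<integral>x. f n x \<partial>\<mu>) = (\<integral>x. f n x * indicator X x \<partial>\<mu>)"
    by (rule Bochner_Integration.integral_cong) (auto simp: sp)
  also have "\<dots> = measure \<mu> (A \<inter> X)" by (rule K[OF assms Xs order.refl Xi])
  finally show ?thesis using AX by (simp add: Int_absorb2)
qed

lemma lim_tail:
  assumes r: "strict_mono r" and x: "x \<in> X" and y: "y \<in> X" and agr: "\<forall>i\<ge>N. x i = y i"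
  shows "lim (\<lambda>j. f (r j + m) x) = lim (\<lambda>j. f (r j + m) y)"
proof -
  have ev: "eventually (\<lambda>j. f (r j + m) x = f (r j + m) y) sequentially"
  proof (rule eventually_sequentiallyI[of N])
    fix j assume "N \<le> j"
    then have "N \<le> r j + m" using seq_suble[OF r, of j] by linarith
    then show "f (r j + m) x = f (r j + m) y" using agr by (simp add: f_def)
  qed
  have "(\<lambda>L. (\<lambda>j. f (r j + m) x) \<longlonglongrightarrow> L) = (\<lambda>L. (\<lambda>j. f (r j + m) y) \<longlonglongrightarrow> L)"
    using tendsto_cong[OF ev] by auto
  then show ?thesis unfolding lim_def by simp
qed

lemma full_inv:
  assumes "\<And>N. invariant_set (Gn T N) S"
  shows "invariant_set (full_group T) S"
  using assms unfolding invariant_set_def full_group_def by blast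

lemma erg_set:
  assumes erg: "ergodic_measure (full_group T) \<mu>" and r: "strict_mono r"
  shows "measure \<mu> {x\<in>space \<mu>. c < lim (\<lambda>j. f (r j + m) x)} \<in> {0,1} \<and>
         measure \<mu> {x\<in>space \<mu>. lim (\<lambda>j. f (r j + m) x) < c} \<in> {0,1}"
proof -
  define F where "F x = lim (\<lambda>j. f (r j + m) x)" for x
  have FM[measurable]: "F \<in> borel_measurable \<mu>" unfolding F_def
    by (rule borel_measurable_lim_metric) (rule f_meas)
  have Fe: "F x = F y" if "x \<in> X" "y \<in> X" "\<forall>i\<ge>N. x i = y i" for x y N
    unfolding F_def by (rule lim_tail[OF r that])
  have S1: "{x\<in>space \<mu>. c < F x} \<in> sets \<mu>" by measurable
  have S2: "{x\<in>space \<mu>. F x < c} \<in> sets \<mu>" by measurable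
  have I1: "invariant_set (full_group T) {x\<in>space \<mu>. c < F x}"
  proof (rule full_inv)
    fix N show "invariant_set (Gn T N) {x\<in>space \<mu>. c < F x}"
    proof (rule tail_inv)
      show "{x\<in>space \<mu>. c < F x} \<subseteq> X" by (auto simp: sp)
      fix x y assume "x \<in> X" "y \<in> X" "\<forall>i\<ge>N. x i = y i" "x \<in> {x\<in>space \<mu>. c < F x}"
      then show "y \<in> {x\<in>space \<mu>. c < F x}" using Fe[of x y N] by (simp add: sp)
    qed
  qed
  have I2: "invariant_set (full_group T) {x\<in>space \<mu>. F x < c}"
  proof (rule full_inv)
    fix N show "invariant_set (Gn T N) {x\<in>space \<mu>. F x < c}"
    proof (rule tail_inv)
      show "{x\<in>space \<mu>. F x < c} \<subseteq> X" by (auto simp: sp)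
      fix x y assume "x \<in> X" "y \<in> X" "\<forall>i\<ge>N. x i = y i" "x \<in> {x\<in>space \<mu>. F x < c}"
      then show "y \<in> {x\<in>space \<mu>. F x < c}" using Fe[of x y N] by (simp add: sp)
    qed
  qed
  show ?thesis using erg S1 S2 I1 I2 unfolding ergodic_measure_def F_def by auto
qed

end

theorem mainTheorem14:
  fixes V :: "nat \<Rightarrow> 'v set" and E :: "nat \<Rightarrow> 'e set"
    and src rng :: "'e \<Rightarrow> 'v" and v0 :: 'v
    and \<mu> :: "(nat \<Rightarrow> 'e) measure"
    and B :: "(nat \<Rightarrow> 'e) set" and Bn :: "nat \<Rightarrow> (nat \<Rightarrow> 'e) set"
  defines "T \<equiv> path_topology E src rng v0"
  assumes "bratteli V E src rng v0"
    and "cantor_space T"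
    and "minimal_action T (full_group T)"
    and "borel_prob T \<mu>"
    and "invariant_measure (full_group T) \<mu>"
    and "ergodic_measure (full_group T) \<mu>"
    and "clopen_in T B"
    and "\<And>n. clopen_in T (Bn n) \<and> invariant_set (Gn T n) (Bn n)"
    and "(\<lambda>n. measure \<mu> (Bn n)) \<longlonglongrightarrow> measure \<mu> B"
    and "measure \<mu> B > 0"
  shows "\<forall>A. clopen_in T A \<longrightarrow>
           (\<lambda>n. measure \<mu> (A \<inter> Bn n)) \<longlonglongrightarrow> measure \<mu> A * measure \<mu> B"
proof (intro allI impI)
  fix A assume clA: "clopen_in T A"
  interpret BD V E src rng v0 by unfold_locales (rule assms(2))
  have cs: "compact_space T" using assms(3) by (simp add: cantor_space_def)
  obtain m where m: "\<forall>x y. x \<in> A \<longrightarrow> y \<in> X \<longrightarrow> (\<forall>i<m. x i = y i) \<longrightarrow> y \<in> A"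
    using clopen_fd[OF cs[unfolded T_def] clA[unfolded T_def]] by blast
  have AX: "A \<subseteq> X" using openin_subset[of T A] clA topT by (auto simp: clopen_in_def T_def)
  interpret BDM V E src rng v0 \<mu> A m
    by unfold_locales (use assms(5,6) AX m in \<open>auto simp: T_def\<close>)
  interpret prob_space \<mu> by (rule ps)
  define c where "c = measure \<mu> A"
  define g where "g n = f (n + m)" for n
  have conv: "(\<lambda>n. \<integral>x. \<bar>g n x - c\<bar> \<partial>\<mu>) \<longlonglongrightarrow> 0"
  proof (rule ana)
    show "g n \<in> borel_measurable \<mu>" for n unfolding g_def by (rule f_meas)
    show "0 \<le> g n x \<and> g n x \<le> 1" for n x unfolding g_def by (rule f_bnd)
    show "(\<integral>x. g n x * g k x \<partial>\<mu>) = (\<integral>x. (g k x)^2 \<partial>\<mu>)" if "n \<le> k" for n k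
      unfolding g_def by (rule cross) (use that in auto)
    show "(\<integral>x. g n x \<partial>\<mu>) = c" for n unfolding g_def c_def by (rule mean) auto
    show "measure \<mu> {x\<in>space \<mu>. c < lim (\<lambda>j. g (r j) x)} \<in> {0,1} \<and>
        measure \<mu> {x\<in>space \<mu>. lim (\<lambda>j. g (r j) x) < c} \<in> {0,1}" if "strict_mono r" for r
      unfolding g_def by (rule erg_set) (use assms(7) that in \<open>auto simp: T_def\<close>)
  qed
  have Bs: "Bn n \<in> sets \<mu>" "Bn n \<subseteq> X" "invariant_set (Gn (path_topology E src rng v0) n) (Bn n)" for n
  proof -
    have o: "openin (path_topology E src rng v0) (Bn n)" using assms(9)[of n] by (simp add: clopen_in_def T_def)
    then show "Bn n \<in> sets \<mu>" using mu by (auto simp: borel_prob_def intro: sigma_sets.Basic)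
    show "Bn n \<subseteq> X" using openin_subset[OF o] topT by simp
    show "invariant_set (Gn (path_topology E src rng v0) n) (Bn n)" using assms(9)[of n] by (simp add: T_def)
  qed
  have bound: "\<bar>measure \<mu> (A \<inter> Bn (n + m)) - c * measure \<mu> (Bn (n + m))\<bar> \<le> (\<integral>x. \<bar>g n x - c\<bar> \<partial>\<mu>)" for n
  proof -
    let ?B = "Bn (n + m)"
    have "measure \<mu> (A \<inter> ?B) = (\<integral>x. f (n + m) x * indicator ?B x \<partial>\<mu>)"
      by (rule K[symmetric]) (use Bs in auto)
    moreover have "c * measure \<mu> ?B = (\<integral>x. c * indicator ?B x \<partial>\<mu>)"
      using Bs(2)[of "n + m"] by (simp add: sp Int_absorb2)
    ultimately have "measure \<mu> (A \<inter> ?B) - c * measure \<mu> ?B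
        = (\<integral>x. f (n + m) x * indicator ?B x \<partial>\<mu>) - (\<integral>x. c * indicator ?B x \<partial>\<mu>)" by simp
    also have "\<dots> = (\<integral>x. (g n x - c) * indicator ?B x \<partial>\<mu>)"
    proof -
      have i1: "integrable \<mu> (\<lambda>x. f (n + m) x * indicator ?B x)"
        by (rule int_bdd[where B=1]) (use f_meas Bs f_bnd in \<open>auto simp: indicator_def\<close>)
      have i2: "integrable \<mu> (\<lambda>x. c * indicator ?B x)"
        using Bs by (intro integrable_mult_right integrable_real_indicator) (auto simp: emeasure_eq_measure)
      show ?thesis using i1 i2 by (simp add: g_def left_diff_distrib)
    qed
    also have "\<bar>\<dots>\<bar> \<le> (\<integral>x. \<bar>g n x - c\<bar> \<partial>\<mu>)"
    proof -
      have c01: "0 \<le> c" "c \<le> 1" unfolding c_def by (auto simp: prob_le_1)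
      have gm: "g n \<in> borel_measurable \<mu>" unfolding g_def by (rule f_meas)
      have hI1: "integrable \<mu> (\<lambda>x. (g n x - c) * indicator ?B x)"
        proof (rule int_bdd[where B=2])
          show "(\<lambda>x. (g n x - c) * indicator ?B x) \<in> borel_measurable \<mu>"
            using gm Bs(1) by (intro borel_measurable_times borel_measurable_diff borel_measurable_const borel_measurable_indicator)
          fix x show "\<bar>(g n x - c) * indicator ?B x\<bar> \<le> 2"
            using f_bnd[of "n + m" x] c01 by (auto simp: g_def indicator_def)
        qed
      have hI2: "integrable \<mu> (\<lambda>x. \<bar>g n x - c\<bar>)"
        proof (rule int_bdd[where B=2])
          show "(\<lambda>x. \<bar>g n x - c\<bar>) \<in> borel_measurable \<mu>"
            using gm by (intro borel_measurable_abs borel_measurable_diff borel_measurable_const)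
          fix x show "\<bar>\<bar>g n x - c\<bar>\<bar> \<le> 2"
            using f_bnd[of "n + m" x] c01 by (auto simp: g_def)
        qed
      have "norm (\<integral>x. (g n x - c) * indicator ?B x \<partial>\<mu>) \<le> (\<integral>x. norm ((g n x - c) * indicator ?B x) \<partial>\<mu>)"
        by (rule integral_norm_bound)
      also have "\<dots> \<le> (\<integral>x. \<bar>g n x - c\<bar> \<partial>\<mu>)"
        using hI1 hI2 by (intro integral_mono) (auto simp: indicator_def)
      finally have "norm (\<integral>x. (g n x - c) * indicator ?B x \<partial>\<mu>) \<le> (\<integral>x. \<bar>g n x - c\<bar> \<partial>\<mu>)" .
      then show ?thesis by simp
    qed
    finally show ?thesis .
  qed
  have lim0: "(\<lambda>n. measure \<mu> (A \<inter> Bn (n + m)) - c * measure \<mu> (Bn (n + m))) \<longlonglongrightarrow> 0"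
    by (rule Lim_null_comparison[OF _ conv]) (use bound in auto)
  have limB: "(\<lambda>n. measure \<mu> (Bn (n + m))) \<longlonglongrightarrow> measure \<mu> B"
    using LIMSEQ_ignore_initial_segment[OF assms(10)] .
  have "(\<lambda>n. (measure \<mu> (A \<inter> Bn (n + m)) - c * measure \<mu> (Bn (n + m))) + c * measure \<mu> (Bn (n + m)))
      \<longlonglongrightarrow> 0 + c * measure \<mu> B"
    by (intro tendsto_intros lim0 limB)
  then have "(\<lambda>n. measure \<mu> (A \<inter> Bn (n + m))) \<longlonglongrightarrow> c * measure \<mu> B" by simp
  then show "(\<lambda>n. measure \<mu> (A \<inter> Bn n)) \<longlonglongrightarrow> measure \<mu> A * measure \<mu> B"
    unfolding c_def by (rule LIMSEQ_offset)
qed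

end
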